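(* Let $\mathcal F\subseteq[\mathbb R^p\to\mathbb R^d]$ and let $\Pi_{\mathcal F}=\{\pi_f:f\in\mathcal F\}$ be the induced class of plug-in policies. Then the Natarajan dimension of $\Pi_{\mathcal F}$ is at most the VC-linear-subgraph dimension of $\mathcal F$.
   Context: $\mathcal Z=\{z\in\mathbb R^d:Az\le b\}$ is a bounded polytope with finite set of extreme points $\mathcal Z^\angle$. For $f:\mathbb R^p\to\mathbb R^d$, the plug-in policy $\pi_f$ is defined by $\pi_f(x)\in\arg\min_{z\in\mathcal Z}f(x)^\top z$, where $\pi_f(x)$ is always chosen in $\mathcal Z^\angle$, with ties broken by a fixed ordering of $\mathcal Z^\angle$ (the same ordering for all $f$ and $x$). The VC-linear-subgraph dimension of $\mathcal F$ is the largest integer $\nu$ for which there exist $x_1,\dots,x_\nu\in\mathbb R^p$, $\beta_1,\dots,\beta_\nu\in\mathbb R^d$, $t_1,\dots,t_\nu\in\mathbb R$ such that $\{(\mathbb I\{\beta_1^\top f(x_1)\le t_1\},\dots,\mathbb I\{\beta_\nu^\top f(x_\nu)\le t_\nu\}):f\in\mathcal F\}=\{0,1\}^\nu$. The Natarajan dimension of a class $\mathcal G\subseteq[\mathbb R^p\to\mathcal S]$ is the largest integer $\eta$ for which there exist $x_1,\dots,x_\eta\in\mathbb R^p$ and $s_1\neq s_1',\dots,s_\eta\neq s_\eta'\in\mathcal S$ such that $\{(\mathbb I\{g(x_1)=s_1\},\dots,\mathbb I\{g(x_\eta)=s_\eta\}):g\in\mathcal G,\ g(x_k)\in\{s_k,s_k'\}\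 \forall k\}=\{0,1\}^\eta$. *)

theory Defs
  imports "HOL-Analysis.Analysis"
begin

definition polytope_set :: "real^'d^'m \<Rightarrow> real^'m \<Rightarrow> (real^'d) set" where
  "polytope_set A b = {z. \<forall>i. (A *v z) $ i \<le> b $ i}"

text \<open>Plug-in policy: the first extreme point (in the fixed ordering given by the
  list zs enumerating the extreme points) minimising f(x)^T z over Z.\<close>
definition plugin_policy ::
  "(real^'d) set \<Rightarrow> (real^'d) list \<Rightarrow> ('p \<Rightarrow> real^'d) \<Rightarrow> 'p \<Rightarrow> real^'d" where
  "plugin_policy Z zs f x = hd (filter (\<lambda>z. \<forall>w\<in>Z. f x \<bullet> z \<le> f x \<bullet> w) zs)"

definition natarajan_shatters :: "('a \<Rightarrow> 's) set \<Rightarrow> nat \<Rightarrow> bool" where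
  "natarajan_shatters G n \<longleftrightarrow>
     (\<exists>(xs::nat \<Rightarrow> 'a) (s::nat \<Rightarrow> 's) (s'::nat \<Rightarrow> 's).
        (\<forall>k<n. s k \<noteq> s' k) \<and>
        {map (\<lambda>k. g (xs k) = s k) [0..<n] | g. g \<in> G \<and> (\<forall>k<n. g (xs k) \<in> {s k, s' k})}
          = {bs. length bs = n})"

definition natarajan_dim :: "('a \<Rightarrow> 's) set \<Rightarrow> enat" where
  "natarajan_dim G = Sup {enat n | n. natarajan_shatters G n}"

definition vc_ls_shatters :: "('a \<Rightarrow> 'b::real_inner) set \<Rightarrow> nat \<Rightarrow> bool" where
  "vc_ls_shatters F n \<longleftrightarrow>
     (\<exists>(xs::nat \<Rightarrow> 'a) (\<beta>::nat \<Rightarrow> 'b) (t::nat \<Rightarrow> real).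
        {map (\<lambda>k. \<beta> k \<bullet> f (xs k) \<le> t k) [0..<n] | f. f \<in> F} = {bs. length bs = n})"

definition vc_ls_dim :: "('a \<Rightarrow> 'b::real_inner) set \<Rightarrow> enat" where
  "vc_ls_dim F = Sup {enat n | n. vc_ls_shatters F n}"

end

theory Submission
  imports Defs
begin

lemma min_at_extreme:
  fixes Z :: "'a::euclidean_space set"
  assumes "compact Z" "convex Z" "finite {x. x extreme_point_of Z}" "{x. x extreme_point_of Z} \<noteq> {}"
  shows "\<exists>e. e extreme_point_of Z \<and> (\<forall>w\<in>Z. c \<bullet> e \<le> c \<bullet> w)"
proof -
  let ?E = "{x. x extreme_point_of Z}"
  define m where "m = Min ((\<lambda>y. c \<bullet> y) ` ?E)"
  have "m \<in> (\<lambda>y. c \<bullet> y) ` ?E" unfolding m_def using assms by (intro Min_in) auto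
  then obtain e where e: "e \<in> ?E" "m = c \<bullet> e" by auto
  have le: "\<forall>y\<in>?E. c \<bullet> e \<le> c \<bullet> y" using assms e unfolding m_def
    by (metis (no_types, lifting) Min_le finite_imageI image_eqI)
  have "convex hull ?E \<subseteq> {w. c \<bullet> e \<le> c \<bullet> w}"
    by (rule hull_minimal) (use le convex_halfspace_ge in auto)
  then have "\<forall>w\<in>Z. c \<bullet> e \<le> c \<bullet> w" using Krein_Milman_Minkowski[OF assms(1,2)] by auto
  then show ?thesis using e by auto
qed

lemma map_upt_nth: "map P [0..<n] = bs \<Longrightarrow> k < n \<Longrightarrow> P k = bs ! k"
  by (drule arg_cong[where f="\<lambda>l. l ! k"]) simp

definition before :: "'a list \<Rightarrow> 'a \<Rightarrow> 'a \<Rightarrow> bool" where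
  "before zs a b \<longleftrightarrow> a \<in> set (takeWhile (\<lambda>z. z \<noteq> b) zs)"

lemma before_total:
  assumes "a \<in> set zs" "b \<in> set zs" "a \<noteq> b"
  shows "before zs a b \<or> before zs b a"
proof -
  obtain us vs where zs: "zs = us @ b # vs" "b \<notin> set us" using split_list_first[OF assms(2)] by auto
  show ?thesis
  proof (cases "a \<in> set us")
    case True
    then show ?thesis unfolding before_def zs using zs(2) by (subst takeWhile_append2) auto
  next
    case False
    then have "takeWhile (\<lambda>z. z \<noteq> a) zs = us @ b # takeWhile (\<lambda>z. z \<noteq> a) vs"
      unfolding zs using assms(3) by (subst takeWhile_append2) auto
    then show ?thesis unfolding before_def by auto
  qed
qed

lemma hd_filter_props:
  assumes "distinct zs" "\<exists>z\<in>set zs. P z"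
  shows "hd (filter P zs) \<in> set zs \<and> P (hd (filter P zs)) \<and>
         (\<forall>a. before zs a (hd (filter P zs)) \<longrightarrow> \<not> P a)"
proof -
  obtain y ys where fy: "filter P zs = y # ys"
    using assms(2) by (cases "filter P zs") (auto simp: filter_empty_conv)
  from fy[unfolded filter_eq_Cons_iff] obtain us vs where zs: "zs = us @ y # vs" "\<forall>u\<in>set us. \<not> P u" "P y"
    by blast
  have "y \<notin> set us" using assms(1) zs(1) by auto
  then have "takeWhile (\<lambda>z. z \<noteq> y) zs = us" unfolding zs by (subst takeWhile_append2) auto
  then show ?thesis using fy zs unfolding before_def by auto
qed

theorem theorem2:
  fixes A :: "real^'d^'m" and b :: "real^'m"
    and zs :: "(real^'d) list"
    and \<F> :: "(real^'p \<Rightarrow> real^'d) set"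
  assumes "bounded (polytope_set A b)"
    and "finite {z. z extreme_point_of (polytope_set A b)}"
    and "distinct zs"
    and "set zs = {z. z extreme_point_of (polytope_set A b)}"
  shows "natarajan_dim ((\<lambda>f. plugin_policy (polytope_set A b) zs f) ` \<F>) \<le> vc_ls_dim \<F>"
proof -
  let ?Z = "polytope_set A b"
  let ?G = "(\<lambda>f. plugin_policy ?Z zs f) ` \<F>"
  have closed: "closed ?Z"
  proof -
    have "?Z = (\<Inter>i. {z. (A *v z) $ i \<le> b $ i})" unfolding polytope_set_def by auto
    moreover have "closed {z. (A *v z) $ i \<le> b $ i}" for i
      by (intro closed_Collect_le continuous_intros)
    ultimately show ?thesis by auto
  qed
  have convex: "convex ?Z"
    unfolding polytope_set_def convex_def
    by (auto simp: matrix_vector_right_distrib matrix_vector_mult_scaleR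
        intro: convex_bound_le[unfolded convex_def] )
  have compact: "compact ?Z" using closed assms(1) by (simp add: compact_eq_bounded_closed)
  have ext_in: "set zs \<subseteq> ?Z" using assms(4) extreme_point_of_def by auto
  have key: "natarajan_shatters ?G n \<Longrightarrow> vc_ls_shatters \<F> n" for n
  proof -
    assume "natarajan_shatters ?G n"
    then obtain xs s s' where ss: "\<forall>k<n. s k \<noteq> s' k"
      and eq: "{map (\<lambda>k. g (xs k) = s k) [0..<n] | g. g \<in> ?G \<and> (\<forall>k<n. g (xs k) \<in> {s k, s' k})}
          = {bs. length bs = n}"
      unfolding natarajan_shatters_def apply (elim exE conjE) apply (rule that) apply assumption+ done
    have get: "\<exists>f\<in>\<F>. (\<forall>k<n. plugin_policy ?Z zs f (xs k) \<in> {s k, s' k}) \<and>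
                 map (\<lambda>k. plugin_policy ?Z zs f (xs k) = s k) [0..<n] = bs" if "length bs = n" for bs
    proof -
      have "bs \<in> {map (\<lambda>k. g (xs k) = s k) [0..<n] | g. g \<in> ?G \<and> (\<forall>k<n. g (xs k) \<in> {s k, s' k})}"
        using that by (subst eq) simp
      then obtain g where g: "bs = map (\<lambda>k. g (xs k) = s k) [0..<n]" "g \<in> ?G" "\<forall>k<n. g (xs k) \<in> {s k, s' k}"
        by blast
      from g(2) obtain f where "f \<in> \<F>" "g = plugin_policy ?Z zs f" by blast
      then show ?thesis using g by auto
    qed
    show "vc_ls_shatters \<F> n"
    proof (cases "n = 0")
      case True
      obtain f where "f \<in> \<F>" using get[of "[]"] True by auto
      then show ?thesis unfolding vc_ls_shatters_def using True by auto
    next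
      case False
      then have k0: "0 < n" by simp
      have zsne: "zs \<noteq> []"
      proof
        assume zs0: "zs = []"
        obtain f1 where f1: "f1 \<in> \<F>" "plugin_policy ?Z zs f1 (xs 0) = s 0"
        proof -
          obtain f1 where h: "f1 \<in> \<F>" "map (\<lambda>k. plugin_policy ?Z zs f1 (xs k) = s k) [0..<n] = replicate n True"
            using get[of "replicate n True"] by auto
          have "(plugin_policy ?Z zs f1 (xs 0) = s 0) = True" using map_upt_nth[OF h(2) k0] k0 by simp
          then show ?thesis using h(1) that by simp
        qed
        obtain f2 where f2: "f2 \<in> \<F>" "plugin_policy ?Z zs f2 (xs 0) \<noteq> s 0"
        proof -
          obtain f1 where h: "f1 \<in> \<F>" "map (\<lambda>k. plugin_policy ?Z zs f1 (xs k) = s k) [0..<n] = replicate n False"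
            using get[of "replicate n False"] by auto
          have "(plugin_policy ?Z zs f1 (xs 0) = s 0) = False" using map_upt_nth[OF h(2) k0] k0 by simp
          then show ?thesis using h(1) that by simp
        qed
        show False using f1 f2 zs0 unfolding plugin_policy_def by simp
      qed
      have minex: "\<exists>z\<in>set zs. \<forall>w\<in>?Z. c \<bullet> z \<le> c \<bullet> w" for c
      proof -
        obtain z0 where "z0 \<in> set zs" using zsne by (cases zs) auto
        then have "{x. x extreme_point_of ?Z} \<noteq> {}" using assms(4) by auto
        then show ?thesis using min_at_extreme[OF compact convex assms(2), of c] assms(4) by auto
      qed
      have pol: "plugin_policy ?Z zs f x \<in> set zs \<and> (\<forall>w\<in>?Z. f x \<bullet> plugin_policy ?Z zs f x \<le> f x \<bullet> w) \<and>
          (\<forall>a. before zs a (plugin_policy ?Z zs f x) \<longrightarrow> \<not> (\<forall>w\<in>?Z. f x \<bullet> a \<le> f x \<bullet> w))" for f x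
        unfolding plugin_policy_def by (rule hd_filter_props[OF assms(3) minex])
      have sin: "s k \<in> set zs \<and> s' k \<in> set zs" if "k < n" for k
      proof -
        obtain f1 where f1': "map (\<lambda>k. plugin_policy ?Z zs f1 (xs k) = s k) [0..<n] = replicate n True"
          using get[of "replicate n True"] by auto
        have f1: "plugin_policy ?Z zs f1 (xs k) = s k" using map_upt_nth[OF f1' that] that by simp
        obtain f2 where f2': "map (\<lambda>k. plugin_policy ?Z zs f2 (xs k) = s k) [0..<n] = replicate n False"
          "\<forall>k<n. plugin_policy ?Z zs f2 (xs k) \<in> {s k, s' k}"
          using get[of "replicate n False"] by auto
        have f2: "plugin_policy ?Z zs f2 (xs k) \<in> {s k, s' k}" "plugin_policy ?Z zs f2 (xs k) \<noteq> s k"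
          using map_upt_nth[OF f2'(1) that] that f2'(2) by auto
        show ?thesis using pol[of f1 "xs k"] pol[of f2 "xs k"] f1 f2 by auto
      qed
      define fl where "fl k = (\<not> before zs (s k) (s' k))" for k
      define \<beta> where "\<beta> k = (if before zs (s k) (s' k) then s k - s' k else s' k - s k)" for k
      have crit: "(\<beta> k \<bullet> f (xs k) \<le> 0) = ((plugin_policy ?Z zs f (xs k) = s k) \<noteq> fl k)"
        if "k < n" "plugin_policy ?Z zs f (xs k) \<in> {s k, s' k}" for k f
      proof -
        let ?p = "plugin_policy ?Z zs f (xs k)"
        let ?c = "f (xs k)"
        have sk: "s k \<in> ?Z" "s' k \<in> ?Z" using sin[OF that(1)] ext_in by auto
        have P1: "\<forall>w\<in>?Z. ?c \<bullet> ?p \<le> ?c \<bullet> w" by (rule conjunct1[OF conjunct2[OF pol[of f "xs k"]]])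
        have P2: "\<forall>a. before zs a ?p \<longrightarrow> \<not> (\<forall>w\<in>?Z. ?c \<bullet> a \<le> ?c \<bullet> w)"
          by (rule conjunct2[OF conjunct2[OF pol[of f "xs k"]]])
        note P = P1 P2
        have m1a: "?c \<bullet> ?p \<le> ?c \<bullet> s k" by (rule bspec[OF P(1) sk(1)])
        have m1b: "?c \<bullet> ?p \<le> ?c \<bullet> s' k" by (rule bspec[OF P(1) sk(2)])
        note m1 = m1a m1b
        have tot: "before zs (s k) (s' k) \<or> before zs (s' k) (s k)"
          using before_total[of "s k" zs "s' k"] sin[OF that(1)] ss that(1) by simp
        have ip: "\<beta> k \<bullet> ?c = (if before zs (s k) (s' k) then ?c \<bullet> s k - ?c \<bullet> s' k else ?c \<bullet> s' k - ?c \<bullet> s k)"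
          unfolding \<beta>_def by (simp add: inner_commute[of _ "f (xs k)"] inner_diff_right)
        show ?thesis
        proof (cases "before zs (s k) (s' k)")
          case True
          show ?thesis
          proof (cases "?p = s k")
            case True
            then show ?thesis using m1 ip \<open>before zs (s k) (s' k)\<close> fl_def by simp
          next
            case False
            then have p': "?p = s' k" using that(2) by auto
            have "\<not> (?c \<bullet> s k \<le> ?c \<bullet> s' k)"
            proof
              assume h: "?c \<bullet> s k \<le> ?c \<bullet> s' k"
              have "\<forall>w\<in>?Z. ?c \<bullet> s k \<le> ?c \<bullet> w" using P(1) p' h by (metis order_trans)
              moreover have "before zs (s k) ?p" using True p' by simp
              ultimately show False using P(2) by blast
            qed
            then show ?thesis using ip True False fl_def by simp
          qed
        next
          case False
          then have bf: "before zs (s' k) (s k)" using tot by auto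
          show ?thesis
          proof (cases "?p = s k")
            case True
            have "\<not> (?c \<bullet> s' k \<le> ?c \<bullet> s k)"
            proof
              assume h: "?c \<bullet> s' k \<le> ?c \<bullet> s k"
              have "\<forall>w\<in>?Z. ?c \<bullet> s' k \<le> ?c \<bullet> w" using P(1) True h by (metis order_trans)
              moreover have "before zs (s' k) ?p" using True bf by simp
              ultimately show False using P(2) by blast
            qed
            then show ?thesis using ip True False fl_def by simp
          next
            case False
            then have p': "?p = s' k" using that(2) by auto
            then show ?thesis using m1 ip \<open>\<not> before zs (s k) (s' k)\<close> fl_def False by simp
          qed
        qed
      qed
      show ?thesis unfolding vc_ls_shatters_def
      proof (intro exI[of _ xs] exI[of _ \<beta>] exI[of _ "\<lambda>_. 0"] equalityI subsetI)
        fix bs assume "bs \<in> {map (\<lambda>k. \<beta> k \<bullet> f (xs k) \<le> 0) [0..<n] |f. f \<in> \<F>}"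
        then show "bs \<in> {bs. length bs = n}" by auto
      next
        fix bs :: "bool list" assume "bs \<in> {bs. length bs = n}"
        then have len: "length bs = n" by simp
        obtain f where f: "f \<in> \<F>" "\<forall>k<n. plugin_policy ?Z zs f (xs k) \<in> {s k, s' k}"
          "map (\<lambda>k. plugin_policy ?Z zs f (xs k) = s k) [0..<n] = map (\<lambda>k. bs ! k \<noteq> fl k) [0..<n]"
          using get[of "map (\<lambda>k. bs ! k \<noteq> fl k) [0..<n]"] by auto
        have "map (\<lambda>k. \<beta> k \<bullet> f (xs k) \<le> 0) [0..<n] = bs"
        proof (rule nth_equalityI)
          show "length (map (\<lambda>k. \<beta> k \<bullet> f (xs k) \<le> 0) [0..<n]) = length bs" using len by simp
        next
          fix i assume "i < length (map (\<lambda>k. \<beta> k \<bullet> f (xs k) \<le> 0) [0..<n])"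
          then have i: "i < n" by simp
          have "(plugin_policy ?Z zs f (xs i) = s i) = (bs ! i \<noteq> fl i)"
            using arg_cong[OF f(3), of "\<lambda>l. l ! i"] i by simp
          then show "map (\<lambda>k. \<beta> k \<bullet> f (xs k) \<le> 0) [0..<n] ! i = bs ! i"
            using crit[OF i f(2)[rule_format, OF i]] i by auto
        qed
        then show "bs \<in> {map (\<lambda>k. \<beta> k \<bullet> f (xs k) \<le> (\<lambda>_. 0) k) [0..<n] |f. f \<in> \<F>}"
          using f(1) by auto
      qed
    qed
  qed
  show ?thesis unfolding natarajan_dim_def vc_ls_dim_def
  proof (rule Sup_subset_mono, rule subsetI)
    fix x assume "x \<in> {enat n |n. natarajan_shatters ?G n}"
    then obtain n where n: "x = enat n" "natarajan_shatters ?G n" by blast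
    have "vc_ls_shatters \<F> n" by (rule key[OF n(2)])
    then show "x \<in> {enat n |n. vc_ls_shatters \<F> n}" using n(1) by blast
  qed
qed

end
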